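(* For every tree $T$ of order $n \ge 3$, $$\operatorname{irr}(T) > n \operatorname{Var}(T).$$
   Context: For a graph $G=(V,E)$ of order $n$ and size $m$, $d(u)$ denotes the degree of a vertex $u$. The (Albertson) irregularity is $\operatorname{irr}(G)=\sum_{uv\in E}|d(u)-d(v)|$. The degree variance is $\operatorname{Var}(G)=\frac{1}{n}\sum_{u\in V}(d(u)-\overline d)^2$, where $\overline d = 2m/n$ is the average degree. *)

theory Defs
  imports Complex_Main
begin

definition simple_graph :: "'a set \<Rightarrow> 'a set set \<Rightarrow> bool" where
  "simple_graph V E \<longleftrightarrow> finite V \<and> (\<forall>e\<in>E. e \<subseteq> V \<and> card e = 2)"

definition degree :: "'a set set \<Rightarrow> 'a \<Rightarrow> nat" where
  "degree E u = card {e \<in> E. u \<in> e}"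

fun is_walk :: "'a set set \<Rightarrow> 'a list \<Rightarrow> bool" where
  "is_walk E [] = False"
| "is_walk E [x] = True"
| "is_walk E (x # y # xs) = ({x, y} \<in> E \<and> is_walk E (y # xs))"

definition connected_graph :: "'a set \<Rightarrow> 'a set set \<Rightarrow> bool" where
  "connected_graph V E \<longleftrightarrow> V \<noteq> {} \<and>
     (\<forall>u\<in>V. \<forall>v\<in>V. \<exists>p. is_walk E p \<and> hd p = u \<and> last p = v)"

definition has_cycle :: "'a set set \<Rightarrow> bool" where
  "has_cycle E \<longleftrightarrow> (\<exists>p. length p \<ge> 3 \<and> distinct p \<and> is_walk E (p @ [hd p]))"

definition is_tree :: "'a set \<Rightarrow> 'a set set \<Rightarrow> bool" where
  "is_tree V E \<longleftrightarrow> simple_graph V E \<and> connected_graph V E \<and> \<not> has_cycle E"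

(* sum over edges uv of |d(u)-d(v)|; each edge {u,v} counted as the two ordered pairs, hence 1/2 *)
definition irr :: "'a set \<Rightarrow> 'a set set \<Rightarrow> real" where
  "irr V E = (1/2) * (\<Sum>(u,v)\<in>{(u,v). u \<in> V \<and> v \<in> V \<and> {u,v} \<in> E}.
                 \<bar>real (degree E u) - real (degree E v)\<bar>)"

definition avg_degree :: "'a set \<Rightarrow> 'a set set \<Rightarrow> real" where
  "avg_degree V E = 2 * real (card E) / real (card V)"

definition degree_variance :: "'a set \<Rightarrow> 'a set set \<Rightarrow> real" where
  "degree_variance V E = (1 / real (card V)) * (\<Sum>u\<in>V. (real (degree E u) - avg_degree V E)^2)"

end

theory Submission
  imports Defs
begin

lemma walk_Cons: "is_walk E (x # xs) \<longleftrightarrow> (xs = [] \<or> ({x, hd xs} \<in> E \<and> is_walk E xs))"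
  by (cases xs) auto

lemma walk_append_single:
  "xs \<noteq> [] \<Longrightarrow> is_walk E (xs @ [y]) \<longleftrightarrow> is_walk E xs \<and> {last xs, y} \<in> E"
  by (induction E xs rule: is_walk.induct) auto

lemma walk_suffix: "is_walk E (xs @ ys) \<Longrightarrow> ys \<noteq> [] \<Longrightarrow> is_walk E ys"
  by (induction xs) (auto simp: walk_Cons)

lemma walk_mono: "is_walk E' p \<Longrightarrow> E' \<subseteq> E \<Longrightarrow> is_walk E p"
  by (induction E' p rule: is_walk.induct) auto

lemma cycle_mono: "has_cycle E' \<Longrightarrow> E' \<subseteq> E \<Longrightarrow> has_cycle E"
  unfolding has_cycle_def using walk_mono by blast

lemma edge_other:
  assumes "card e = 2" "x \<in> e" shows "\<exists>y. y \<noteq> x \<and> e = {x, y}"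
  using assms by (auto simp: card_2_iff)

lemma two_elems: "card A \<ge> 2 \<Longrightarrow> \<exists>a b. a \<in> A \<and> b \<in> A \<and> a \<noteq> b"
  by (metis One_nat_def card.infinite card_le_Suc0_iff_eq not_less_eq_eq numeral_2_eq_2 zero_le)

lemma exists_low_degree:
  assumes fin: "finite V" and sg: "\<forall>e\<in>E. e \<subseteq> V \<and> card e = 2" and nc: "\<not> has_cycle E"
    and ne: "V \<noteq> {}"
  shows "\<exists>l\<in>V. degree E l \<le> 1"
proof (rule ccontr)
  assume "\<not> ?thesis"
  hence big: "\<forall>v\<in>V. degree E v \<ge> 2" by auto
  define S where "S = {p. distinct p \<and> is_walk E p \<and> set p \<subseteq> V}"
  obtain v where v: "v \<in> V" using ne by auto
  hence vS: "[v] \<in> S" by (simp add: S_def)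
  have bnd: "\<And>p. p \<in> S \<Longrightarrow> length p \<le> card V"
    unfolding S_def using distinct_card card_mono fin by (metis (mono_tags, lifting) mem_Collect_eq)
  have bnd': "\<forall>p. p \<in> S \<longrightarrow> length p < Suc (card V)" using bnd by (simp add: less_Suc_eq_le)
  obtain p where pS: "p \<in> S" and pmax: "\<And>q. q \<in> S \<Longrightarrow> length q \<le> length p"
    using Lattices_Big.ex_has_greatest_nat[of "\<lambda>p. p \<in> S" "[v]" length "Suc (card V)", OF vS bnd']
    by blast
  have pne: "p \<noteq> []" using pS by (auto simp: S_def)
  define x where "x = last p"
  have xV: "x \<in> V" using pS pne by (auto simp: S_def x_def)
  have "card {e\<in>E. x \<in> e} \<ge> 2" using big xV by (auto simp: degree_def)
  from two_elems[OF this] obtain e1 e2 where "e1 \<in> {e\<in>E. x \<in> e}" "e2 \<in> {e\<in>E. x \<in> e}" "e1 \<noteq> e2"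
    by blast
  hence e: "e1 \<in> E" "e2 \<in> E" "x \<in> e1" "x \<in> e2" "e1 \<noteq> e2" by auto
  have "card e1 = 2" "card e2 = 2" using sg e by auto
  obtain y1 where y1: "y1 \<noteq> x" "e1 = {x, y1}" using edge_other[OF \<open>card e1 = 2\<close> e(3)] by blast
  obtain y2 where y2: "y2 \<noteq> x" "e2 = {x, y2}" using edge_other[OF \<open>card e2 = 2\<close> e(4)] by blast
  have y12: "y1 \<noteq> y2" using y1 y2 e by auto
  have inp: "y \<in> set p" if "{x, y} \<in> E" "y \<noteq> x" for y
  proof (rule ccontr)
    assume "y \<notin> set p"
    moreover have "y \<in> V" using sg that by auto
    ultimately have "p @ [y] \<in> S" using pS pne that
      by (auto simp: S_def walk_append_single x_def)
    thus False using pmax[of "p @ [y]"] by simp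
  qed
  define a where "a = butlast p"
  have pa: "p = a @ [x]" using pne by (simp add: a_def x_def)
  have y1a: "y1 \<in> set a" using inp[of y1] y1 e pa by auto
  have y2a: "y2 \<in> set a" using inp[of y2] y2 e pa by auto
  obtain y where ya: "y \<in> set a" and yl: "y \<noteq> last a" and yE: "{x, y} \<in> E"
  proof (cases "y1 = last a")
    case True
    then show ?thesis using that[of y2] y2a y12 y2 e by auto
  next
    case False
    then show ?thesis using that[of y1] y1a y1 e by auto
  qed
  obtain a1 a2 where a12: "a = a1 @ y # a2" using split_list[OF ya] by blast
  have a2ne: "a2 \<noteq> []" using yl a12 by auto
  define c where "c = y # a2 @ [x]"
  have "distinct c" using pS pa a12 by (auto simp: S_def c_def)
  moreover have "is_walk E c" using pS pa a12 walk_suffix[of E a1 c] by (auto simp: S_def c_def)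
  hence "is_walk E (c @ [hd c])" using yE by (subst walk_append_single) (auto simp: c_def)
  moreover have "length c \<ge> 3" using a2ne by (cases a2) (auto simp: c_def)
  ultimately have "has_cycle E" unfolding has_cycle_def by (intro exI[of _ c]) (simp add: c_def)
  thus False using nc by simp
qed

lemma forest_card:
  "card V = n \<Longrightarrow> finite V \<Longrightarrow> \<forall>e\<in>E. e \<subseteq> V \<and> card e = 2 \<Longrightarrow> \<not> has_cycle E \<Longrightarrow> V \<noteq> {}
   \<Longrightarrow> card E < card V"
proof (induction n arbitrary: V E)
  case 0
  then show ?case by simp
next
  case (Suc n)
  obtain l where l: "l \<in> V" "degree E l \<le> 1" using exists_low_degree[OF Suc.prems(2,3,4,5)] by blast
  show ?case
  proof (cases "V = {l}")
    case True
    have "E = {}"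
    proof (rule ccontr)
      assume "E \<noteq> {}"
      then obtain e where "e \<in> E" by auto
      hence "e \<subseteq> {l}" "card e = 2" using Suc.prems True by auto
      thus False using card_mono[of "{l}" e] by simp
    qed
    thus ?thesis using True by simp
  next
    case False
    define V' where "V' = V - {l}"
    define E' where "E' = {e\<in>E. l \<notin> e}"
    have "card E' < card V'"
    proof (rule Suc.IH)
      show "card V' = n" using Suc.prems l by (simp add: V'_def)
      show "finite V'" using Suc.prems by (simp add: V'_def)
      show "\<forall>e\<in>E'. e \<subseteq> V' \<and> card e = 2" using Suc.prems by (auto simp: E'_def V'_def)
      show "\<not> has_cycle E'" using Suc.prems cycle_mono[of E' E] by (auto simp: E'_def)
      show "V' \<noteq> {}" using False l by (auto simp: V'_def)
    qed
    moreover have "E = E' \<union> {e\<in>E. l \<in> e}" by (auto simp: E'_def)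
    hence "card E \<le> card E' + card {e\<in>E. l \<in> e}" by (metis card_Un_le)
    moreover have "card {e\<in>E. l \<in> e} \<le> 1" using l by (simp add: degree_def)
    moreover have "card V' = card V - 1" using l Suc.prems by (simp add: V'_def)
    ultimately show ?thesis using Suc.prems by linarith
  qed
qed

lemma parent_exists:
  assumes sg: "\<forall>e\<in>E. e \<subseteq> V \<and> card e = 2" and conn: "connected_graph V E" and r: "r \<in> V"
  shows "\<exists>par. (\<forall>v\<in>V-{r}. par v \<in> V \<and> {v, par v} \<in> E) \<and>
     (\<forall>u\<in>V-{r}. \<forall>v\<in>V-{r}. {u, par u} = {v, par v} \<longrightarrow> u = v)"
proof -
  define W where "W v k \<longleftrightarrow> (\<exists>p. is_walk E p \<and> hd p = v \<and> last p = r \<and> length p = Suc k)" for v k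
  define dist where "dist v = (LEAST k. W v k)" for v
  have Wd: "W v (dist v)" if vV: "v \<in> V" for v
  proof -
    have cw: "\<forall>u\<in>V. \<forall>w\<in>V. \<exists>p. is_walk E p \<and> hd p = u \<and> last p = w"
      using conn unfolding connected_graph_def by (rule conjunct2)
    obtain p where p: "is_walk E p" "hd p = v" "last p = r" using bspec[OF bspec[OF cw vV] r] by blast
    hence "p \<noteq> []" by auto
    hence "W v (length p - 1)" using p unfolding W_def by (intro exI[of _ p]) auto
    thus ?thesis unfolding dist_def by (rule LeastI)
  qed
  have dle: "W v k \<Longrightarrow> dist v \<le> k" for v k unfolding dist_def by (rule Least_le)
  have ex: "\<exists>w. w \<in> V \<and> {v, w} \<in> E \<and> dist w < dist v" if v: "v \<in> V - {r}" for v
  proof -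
    obtain p where p: "is_walk E p" "hd p = v" "last p = r" "length p = Suc (dist v)"
      using Wd[of v] v unfolding W_def by auto
    then obtain q where pq: "p = v # q" by (cases p) auto
    have "q \<noteq> []" using pq p v by auto
    then obtain w q' where qw: "q = w # q'" by (cases q) auto
    have E1: "{v, w} \<in> E" using p pq qw by auto
    have "W w (length q')" unfolding W_def using p pq qw by (intro exI[of _ q]) auto
    hence "dist w < dist v" using dle[of w "length q'"] p pq qw by auto
    moreover have "w \<in> V" using sg E1 by auto
    ultimately show ?thesis using E1 by blast
  qed
  hence "\<forall>v\<in>V - {r}. \<exists>w. w \<in> V \<and> {v, w} \<in> E \<and> dist w < dist v" by blast
  from bchoice[OF this] obtain par where par0: "\<forall>v\<in>V - {r}. par v \<in> V \<and> {v, par v} \<in> E \<and> dist (par v) < dist v"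
    by blast
  hence par: "\<And>v. v \<in> V - {r} \<Longrightarrow> par v \<in> V \<and> {v, par v} \<in> E \<and> dist (par v) < dist v"
    by blast
  show ?thesis
  proof (intro exI[of _ par] conjI ballI impI)
    fix v assume "v \<in> V - {r}" thus "par v \<in> V" "{v, par v} \<in> E" using par by auto
  next
    fix u v assume uv: "u \<in> V - {r}" "v \<in> V - {r}" "{u, par u} = {v, par v}"
    show "u = v"
    proof (rule ccontr)
      assume "u \<noteq> v"
      hence "u = par v \<and> par u = v" using uv(3) by (auto simp: doubleton_eq_iff)
      thus False using par[OF uv(1)] par[OF uv(2)] by auto
    qed
  qed
qed

theorem theorem1:
  fixes V :: "'a set" and E :: "'a set set"
  assumes "is_tree V E" and "card V \<ge> 3"
  shows "irr V E > real (card V) * degree_variance V E"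
proof -
  have sg: "\<forall>e\<in>E. e \<subseteq> V \<and> card e = 2" and finV: "finite V" and conn: "connected_graph V E"
    and nc: "\<not> has_cycle E"
    using assms(1) unfolding is_tree_def simple_graph_def by auto
  have Vne: "V \<noteq> {}" using assms(2) by auto
  have "E \<subseteq> Pow V" using sg by auto
  hence finE: "finite E" using finV by (simp add: finite_subset)
  define n where "n = card V"
  define m where "m = card E"
  have n3: "n \<ge> 3" using assms(2) by (simp add: n_def)
  have mlt: "m < n" using forest_card[OF refl finV sg nc Vne] by (simp add: m_def n_def)
  have hs: "(\<Sum>u\<in>V. degree E u) = 2 * m"
  proof -
    have "(\<Sum>u\<in>V. degree E u) = (\<Sum>u\<in>V. \<Sum>e\<in>E. if u \<in> e then 1 else 0)"
      unfolding degree_def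
      by (rule sum.cong[OF refl]) (use sum.inter_filter[OF finE, of "\<lambda>_. 1::nat"] in simp)
    also have "\<dots> = (\<Sum>e\<in>E. \<Sum>u\<in>V. if u \<in> e then 1 else 0)" by (rule sum.swap)
    also have "\<dots> = (\<Sum>e\<in>E. 2)"
    proof (rule sum.cong[OF refl])
      fix e assume eE: "e \<in> E"
      have "{u\<in>V. u \<in> e} = e" using sg eE by auto
      hence "(\<Sum>u\<in>V. if u \<in> e then 1 else 0) = card e"
        using sum.inter_filter[OF finV, of "\<lambda>_. 1::nat" "\<lambda>u. u \<in> e", symmetric]
        by simp
      thus "(\<Sum>u\<in>V. if u \<in> e then 1 else 0) = (2::nat)" using sg eE by auto
    qed
    also have "\<dots> = 2 * m" by (simp add: m_def)
    finally show ?thesis .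
  qed
  obtain r0 where r0: "r0 \<in> V" using Vne by auto
  obtain par0 where par0: "\<forall>v\<in>V-{r0}. par0 v \<in> V \<and> {v, par0 v} \<in> E"
    and inj0: "\<forall>u\<in>V-{r0}. \<forall>v\<in>V-{r0}. {u, par0 u} = {v, par0 v} \<longrightarrow> u = v"
    using parent_exists[OF sg conn r0] by blast
  have "inj_on (\<lambda>v. {v, par0 v}) (V - {r0})" using inj0 unfolding inj_on_def by blast
  moreover have "(\<lambda>v. {v, par0 v}) ` (V - {r0}) \<subseteq> E" using par0 by auto
  ultimately have "card (V - {r0}) \<le> m" unfolding m_def using card_inj_on_le finE by blast
  hence mge: "n - 1 \<le> m" using r0 finV by (simp add: n_def)
  have mn: "m = n - 1" using mlt mge by simp
  obtain r where r: "r \<in> V" "degree E r \<ge> 2"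
  proof (rule ccontr)
    assume "\<not> thesis"
    hence "\<forall>v\<in>V. degree E v \<le> 1" using that by force
    hence "(\<Sum>u\<in>V. degree E u) \<le> card V * 1" using sum_bounded_above[of V "degree E" 1] by simp
    thus False using hs mn n3 by (simp add: n_def)
  qed
  obtain par where par: "\<forall>v\<in>V-{r}. par v \<in> V \<and> {v, par v} \<in> E"
    and inj: "\<forall>u\<in>V-{r}. \<forall>v\<in>V-{r}. {u, par u} = {v, par v} \<longrightarrow> u = v"
    using parent_exists[OF sg conn r(1)] by blast
  define \<phi> where "\<phi> v = {v, par v}" for v
  have injphi: "inj_on \<phi> (V - {r})" using inj unfolding inj_on_def \<phi>_def by blast
  have phisub: "\<phi> ` (V - {r}) \<subseteq> E" using par by (auto simp: \<phi>_def)
  have "card (\<phi> ` (V - {r})) = card E"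
    using card_image[OF injphi] r finV mn by (simp add: m_def n_def)
  hence phiE: "\<phi> ` (V - {r}) = E" using card_subset_eq[OF finE phisub] by blast
  define d where "d u = real (degree E u)" for u
  define N where "N u = {v\<in>V. {u, v} \<in> E}" for u
  define P where "P = {(u,v). u \<in> V \<and> v \<in> V \<and> {u,v} \<in> E}"
  have cardN: "card (N u) = degree E u" if uV: "u \<in> V" for u
  proof -
    have "bij_betw (\<lambda>v. {u, v}) (N u) {e\<in>E. u \<in> e}"
      unfolding bij_betw_def
    proof
      show "inj_on (\<lambda>v. {u, v}) (N u)" unfolding inj_on_def by (auto simp: doubleton_eq_iff)
      show "(\<lambda>v. {u, v}) ` N u = {e \<in> E. u \<in> e}"
      proof
        show "(\<lambda>v. {u, v}) ` N u \<subseteq> {e \<in> E. u \<in> e}" by (auto simp: N_def)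
        show "{e \<in> E. u \<in> e} \<subseteq> (\<lambda>v. {u, v}) ` N u"
        proof
          fix e assume "e \<in> {e \<in> E. u \<in> e}"
          hence eE: "e \<in> E" "u \<in> e" by auto
          have c2: "card e = 2" using sg eE by auto
          obtain y where y: "y \<noteq> u" "e = {u, y}" using edge_other[OF c2 eE(2)] by blast
          have yN: "y \<in> N u" using eE sg uV y by (auto simp: N_def)
          show "e \<in> (\<lambda>v. {u, v}) ` N u" using yN y(2) by (intro image_eqI[of _ _ y]) auto
        qed
      qed
    qed
    thus ?thesis unfolding degree_def by (rule bij_betw_same_card)
  qed
  have PSig: "P = Sigma V N" by (auto simp: P_def N_def)
  have finN: "\<forall>u\<in>V. finite (N u)" using finV by (simp add: N_def)
  have sumP: "(\<Sum>(u,v)\<in>P. f u v) = (\<Sum>u\<in>V. \<Sum>v\<in>N u. f u v)" for f :: "'a \<Rightarrow> 'a \<Rightarrow> real"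
    unfolding PSig by (rule sum.Sigma[OF finV finN, symmetric])
  have Psym: "(v,u) \<in> P" if "(u,v) \<in> P" for u v
    using that unfolding P_def by (simp add: insert_commute)
  have swap: "(\<Sum>(u,v)\<in>P. f u v) = (\<Sum>(u,v)\<in>P. f v u)" for f :: "'a \<Rightarrow> 'a \<Rightarrow> real"
    by (rule sum.reindex_bij_witness[where i=prod.swap and j=prod.swap]) (auto intro: Psym)
  define S2 where "S2 = (\<Sum>u\<in>V. d u ^ 2)"
  have A1: "(\<Sum>(u,v)\<in>P. d u) = S2"
  proof -
    have "(\<Sum>(u,v)\<in>P. d u) = (\<Sum>u\<in>V. \<Sum>v\<in>N u. d u)" by (rule sumP)
    also have "\<dots> = (\<Sum>u\<in>V. d u ^ 2)"
      by (rule sum.cong[OF refl]) (simp add: cardN d_def power2_eq_square)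
    finally show ?thesis by (simp add: S2_def)
  qed
  have A2: "(\<Sum>(u,v)\<in>P. d v) = S2" using swap[of "\<lambda>u v. d u"] A1 by simp
  define M where "M = (\<Sum>(u,v)\<in>P. min (d u) (d v))"
  have irrEq: "irr V E = S2 - M"
  proof -
    have "irr V E = 1/2 * (\<Sum>(u,v)\<in>P. \<bar>d u - d v\<bar>)" by (simp add: irr_def P_def d_def)
    also have "(\<Sum>(u,v)\<in>P. \<bar>d u - d v\<bar>) = (\<Sum>(u,v)\<in>P. d u + d v - 2 * min (d u) (d v))"
      by (rule sum.cong[OF refl]) (auto simp: abs_if min_def)
    also have "\<dots> = (\<Sum>(u,v)\<in>P. d u) + (\<Sum>(u,v)\<in>P. d v) - 2 * M"
      by (simp add: M_def sum.distrib sum_subtractf sum_distrib_left case_prod_beta)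
    finally show ?thesis using A1 A2 by simp
  qed
  define Af where "Af u v = (if u \<noteq> r \<and> v = par u then d u else 0)" for u v
  have minle: "min (d u) (d v) \<le> Af u v + Af v u" if uvP: "(u,v) \<in> P" for u v
  proof -
    have "{u,v} \<in> E" using uvP by (simp add: P_def)
    then obtain x where x: "x \<in> V - {r}" "{u,v} = {x, par x}" using phiE unfolding \<phi>_def by blast
    have nn: "Af a b \<ge> 0" for a b by (simp add: Af_def d_def)
    show ?thesis
    proof (cases "u = x \<and> v = par x")
      case True
      hence "Af u v = d u" using x by (simp add: Af_def)
      thus ?thesis using nn[of v u] by linarith
    next
      case False
      hence "v = x \<and> u = par x" using x(2) by (auto simp: doubleton_eq_iff)
      hence "Af v u = d v" using x by (simp add: Af_def)
      thus ?thesis using nn[of u v] by linarith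
    qed
  qed
  have AfSum: "(\<Sum>(u,v)\<in>P. Af u v) = 2 * real m - d r"
  proof -
    have "(\<Sum>(u,v)\<in>P. Af u v) = (\<Sum>u\<in>V. \<Sum>v\<in>N u. Af u v)" by (rule sumP)
    also have "\<dots> = (\<Sum>u\<in>V. if u \<noteq> r then d u else 0)"
    proof (rule sum.cong[OF refl])
      fix u assume uV: "u \<in> V"
      show "(\<Sum>v\<in>N u. Af u v) = (if u \<noteq> r then d u else 0)"
      proof (cases "u = r")
        case True thus ?thesis by (simp add: Af_def)
      next
        case False
        hence "par u \<in> N u" using par uV by (simp add: N_def)
        moreover have "finite (N u)" using finN uV by blast
        ultimately show ?thesis using False by (simp add: Af_def)
      qed
    qed
    also have "\<dots> = (\<Sum>u\<in>V. d u) - d r"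
    proof -
      have "{u\<in>V. u \<noteq> r} = V - {r}" by auto
      hence "(\<Sum>u\<in>V. if u \<noteq> r then d u else 0) = (\<Sum>u\<in>V - {r}. d u)"
        using sum.inter_filter[OF finV, of d "\<lambda>u. u \<noteq> r"] by simp
      thus ?thesis using sum.remove[OF finV r(1), of d] by simp
    qed
    also have "(\<Sum>u\<in>V. d u) = 2 * real m" using hs unfolding d_def by (metis of_nat_sum of_nat_mult of_nat_numeral)
    finally show ?thesis .
  qed
  have Mle: "M \<le> 2 * (2 * real m - d r)"
  proof -
    have "M \<le> (\<Sum>(u,v)\<in>P. Af u v + Af v u)"
      unfolding M_def by (rule sum_mono) (auto intro: minle)
    also have "\<dots> = (\<Sum>(u,v)\<in>P. Af u v) + (\<Sum>(u,v)\<in>P. Af v u)"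
      by (simp add: sum.distrib case_prod_beta)
    also have "(\<Sum>(u,v)\<in>P. Af v u) = (\<Sum>(u,v)\<in>P. Af u v)" using swap[of Af] by simp
    finally show ?thesis using AfSum by simp
  qed
  have npos: "real n > 0" using n3 by simp
  have sumd: "(\<Sum>u\<in>V. d u) = 2 * real m" using hs unfolding d_def by (metis of_nat_sum of_nat_mult of_nat_numeral)
  have VarEq: "real (card V) * degree_variance V E = S2 - 4 * real m ^ 2 / real n"
  proof -
    define a where "a = 2 * real m / real n"
    have "real (card V) * degree_variance V E = (\<Sum>u\<in>V. (d u - a) ^ 2)"
      using npos by (simp add: degree_variance_def avg_degree_def a_def d_def n_def m_def)
    also have "\<dots> = (\<Sum>u\<in>V. d u ^ 2 - 2 * a * d u + a ^ 2)"
      by (rule sum.cong[OF refl]) (simp add: power2_eq_square algebra_simps)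
    also have "\<dots> = S2 - 2 * a * (\<Sum>u\<in>V. d u) + real n * a ^ 2"
      by (simp add: S2_def sum.distrib sum_subtractf sum_distrib_left n_def)
    also have "\<dots> = S2 - 4 * real m ^ 2 / real n"
      using npos by (simp add: sumd a_def field_simps power2_eq_square)
    finally show ?thesis .
  qed
  have dr: "d r \<ge> 2" using r(2) by (simp add: d_def)
  have mreal: "real m = real n - 1" using mn n3 by simp
  have key: "(4 * real m - 4) * real n < 4 * real m ^ 2"
  proof -
    have nm: "real n = real m + 1" using mreal by simp
    show ?thesis unfolding nm by (simp add: power2_eq_square algebra_simps)
  qed
  hence "4 * real m - 4 < 4 * real m ^ 2 / real n" using npos by (simp add: pos_less_divide_eq)
  moreover have "M \<le> 4 * real m - 4"
  proof -
    have "2 * (2 * real m - d r) \<le> 4 * real m - 4" using dr by simp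
    thus ?thesis using Mle by (rule order_trans[rotated])
  qed
  ultimately have "M < 4 * real m ^ 2 / real n" by (rule le_less_trans[rotated])
  thus ?thesis unfolding irrEq VarEq by simp
qed

end
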